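(* Consider the following optical-network model. Each link $k$ has a set $A_k\subseteq\mathbb{Z}$ of available units. Each trait $t$ has a resource $\mathrm{RI}(t)$, a nonempty integer interval, and for each link $k$ the set $t\oplus k$ of derived traits satisfies: every $t'\in t\oplus k$ has $\mathrm{RI}(t')$ a maximal integer interval contained in $\mathrm{RI}(t)\cap A_k$, and for every maximal integer interval $J\subseteq \mathrm{RI}(t)\cap A_k$ there is $t'\in t\oplus k$ with $\mathrm{RI}(t')=J$. Fix a link $k$ and, for a label $l=(t_a,t_b)$ whose routes end at different nodes, let $l\oplus e=\{(t,t_b): t\in t_a\oplus k\}$, where appending $k$ makes both routes end at the same node. Let $\mathrm{cost}$ be a real-valued function on labels such that for any labels $l_i,l_j$: if $\mathrm{cost}(l_i)\le\mathrm{cost}(l_j)$ then $\mathrm{cost}(l')\le\mathrm{cost}(l)$ for all $l'\in l_i\oplus e$ and all $l\in l_j\oplus e$. Let $l_i=(t_{i,a},t_{i,b})$, $l_j=(t_{j,a},t_{j,b})$ be labels. If $l_i\preceq'_{\ne} l_j$, then for every $l\in l_j\oplus e$ there exists $l'\in l_i\oplus e$ with $l'\preceq'_{=} l$.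
   Context: A trait describes a route in an optical network with its cost and the interval of contiguous units available along it; $t\oplus k$ is the set of traits obtained by appending link $k$. A label is a pair of traits of two link-disjoint routes. For labels $l_i=(t_{i,a},t_{i,b})$, $l_j=(t_{j,a},t_{j,b})$ with routes ending at different nodes: $l_i\preceq'_{\ne} l_j$ iff $\mathrm{cost}(l_i)\le\mathrm{cost}(l_j)$, $\mathrm{RI}(t_{i,a})\supseteq\mathrm{RI}(t_{j,a})$ and $\mathrm{RI}(t_{i,b})\supseteq\mathrm{RI}(t_{j,b})$. For labels $l_i=(t_i,t'_i)$, $l_j=(t_j,t'_j)$ with both routes ending at the same node: $\mathrm{RI}(l_i)\supseteq_n\mathrm{RI}(l_j)$ iff $\mathrm{RI}(t_i)\supseteq\mathrm{RI}(t_j)$ and $\mathrm{RI}(t'_i)\supseteq\mathrm{RI}(t'_j)$; $\mathrm{RI}(l_i)\supseteq_x\mathrm{RI}(l_j)$ iff $\mathrm{RI}(t_i)\supseteq\mathrm{RI}(t'_j)$ and $\mathrm{RI}(t'_i)\supseteq\mathrm{RI}(t_j)$; $\mathrm{RI}(l_i)\supseteq_=\mathrm{RI}(l_j)$ iff one of these two holds; and $l_i\preceq'_= l_j$ iff $\mathrm{cost}(l_i)\le\mathrm{cost}(l_j)$ and $\mathrm{RI}(l_i)\supseteq_=\mathrm{RI}(l_j)$. *)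

theory Defs
  imports Complex_Main
begin

definition int_interval :: "int set \<Rightarrow> bool" where
  "int_interval J \<longleftrightarrow> (\<exists>a b. a \<le> b \<and> J = {a..b})"

definition max_int_interval :: "int set \<Rightarrow> int set \<Rightarrow> bool" where
  "max_int_interval J S \<longleftrightarrow> int_interval J \<and> J \<subseteq> S \<and>
     (\<forall>J'. int_interval J' \<and> J \<subseteq> J' \<and> J' \<subseteq> S \<longrightarrow> J' = J)"

definition label_ext :: "('t \<Rightarrow> 'k \<Rightarrow> 't set) \<Rightarrow> 'k \<Rightarrow> 't \<times> 't \<Rightarrow> ('t \<times> 't) set" where
  "label_ext ext k l = {(t, snd l) | t. t \<in> ext (fst l) k}"

definition dom_ne :: "('t \<times> 't \<Rightarrow> real) \<Rightarrow> ('t \<Rightarrow> int set) \<Rightarrow> 't \<times> 't \<Rightarrow> 't \<times> 't \<Rightarrow> bool" where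
  "dom_ne cost RI li lj \<longleftrightarrow> cost li \<le> cost lj \<and>
     RI (fst lj) \<subseteq> RI (fst li) \<and> RI (snd lj) \<subseteq> RI (snd li)"

definition RI_sup_n :: "('t \<Rightarrow> int set) \<Rightarrow> 't \<times> 't \<Rightarrow> 't \<times> 't \<Rightarrow> bool" where
  "RI_sup_n RI li lj \<longleftrightarrow> RI (fst lj) \<subseteq> RI (fst li) \<and> RI (snd lj) \<subseteq> RI (snd li)"

definition RI_sup_x :: "('t \<Rightarrow> int set) \<Rightarrow> 't \<times> 't \<Rightarrow> 't \<times> 't \<Rightarrow> bool" where
  "RI_sup_x RI li lj \<longleftrightarrow> RI (snd lj) \<subseteq> RI (fst li) \<and> RI (fst lj) \<subseteq> RI (snd li)"

definition RI_sup_eq :: "('t \<Rightarrow> int set) \<Rightarrow> 't \<times> 't \<Rightarrow> 't \<times> 't \<Rightarrow> bool" where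
  "RI_sup_eq RI li lj \<longleftrightarrow> RI_sup_n RI li lj \<or> RI_sup_x RI li lj"

definition dom_eq :: "('t \<times> 't \<Rightarrow> real) \<Rightarrow> ('t \<Rightarrow> int set) \<Rightarrow> 't \<times> 't \<Rightarrow> 't \<times> 't \<Rightarrow> bool" where
  "dom_eq cost RI li lj \<longleftrightarrow> cost li \<le> cost lj \<and> RI_sup_eq RI li lj"

end

theory Submission
  imports Defs
begin

lemma exists_max_ext:
  assumes S: "S \<subseteq> {a..b}" and I: "int_interval I" and IS: "I \<subseteq> S"
  shows "\<exists>J. max_int_interval J S \<and> I \<subseteq> J"
proof -
  define C where "C = {J. int_interval J \<and> I \<subseteq> J \<and> J \<subseteq> S}"
  have "C \<subseteq> Pow {a..b}" unfolding C_def using S by auto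
  then have fin: "finite C" by (rule finite_subset) simp
  have ne: "I \<in> C" using I IS unfolding C_def by auto
  have "finite (card ` C)" "card ` C \<noteq> {}" using fin ne by auto
  then have "Max (card ` C) \<in> card ` C" by (rule Max_in)
  then obtain J where J: "J \<in> C" "card J = Max (card ` C)" by auto
  have ub: "\<And>J'. J' \<in> C \<Longrightarrow> card J' \<le> card J"
    using J fin by simp
  have "max_int_interval J S"
    unfolding max_int_interval_def
  proof (intro conjI allI impI)
    show "int_interval J" "J \<subseteq> S" using J unfolding C_def by auto
  next
    fix J' assume h: "int_interval J' \<and> J \<subseteq> J' \<and> J' \<subseteq> S"
    then have "J' \<in> C" using J unfolding C_def by auto
    then have "card J' \<le> card J" by (rule ub)
    moreover have "J' \<subseteq> {a..b}" using h S by blast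
    then have "finite J'" by (rule finite_subset) simp
    ultimately have "J = J'" using h by (intro card_seteq) auto
    then show "J' = J" by simp
  qed
  then show ?thesis using J unfolding C_def by auto
qed

theorem proposition5:
  fixes A :: "'k \<Rightarrow> int set"
    and RI :: "'t \<Rightarrow> int set"
    and ext :: "'t \<Rightarrow> 'k \<Rightarrow> 't set"
    and k :: 'k
    and cost :: "'t \<times> 't \<Rightarrow> real"
    and li lj :: "'t \<times> 't"
  assumes RI_int: "\<And>t. int_interval (RI t)"
    and plus_sound: "\<And>t k' t'. t' \<in> ext t k' \<Longrightarrow> max_int_interval (RI t') (RI t \<inter> A k')"
    and plus_complete: "\<And>t k' J. max_int_interval J (RI t \<inter> A k') \<Longrightarrow> \<exists>t'\<in>ext t k'. RI t' = J"
    and cost_mono: "\<And>l1 l2. cost l1 \<le> cost l2 \<Longrightarrow>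
        \<forall>l'\<in>label_ext ext k l1. \<forall>l\<in>label_ext ext k l2. cost l' \<le> cost l"
    and dom: "dom_ne cost RI li lj"
  shows "\<forall>l\<in>label_ext ext k lj. \<exists>l'\<in>label_ext ext k li. dom_eq cost RI l' l"
proof
  fix l assume l: "l \<in> label_ext ext k lj"
  then obtain t where t: "t \<in> ext (fst lj) k" and leq: "l = (t, snd lj)"
    unfolding label_ext_def by auto
  have mt: "max_int_interval (RI t) (RI (fst lj) \<inter> A k)" using plus_sound t .
  have d: "cost li \<le> cost lj" "RI (fst lj) \<subseteq> RI (fst li)" "RI (snd lj) \<subseteq> RI (snd li)"
    using dom unfolding dom_ne_def by auto
  obtain a b where ab: "RI (fst li) = {a..b}" using RI_int[of "fst li"]
    unfolding int_interval_def by auto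
  have "RI t \<subseteq> RI (fst li) \<inter> A k" using mt d unfolding max_int_interval_def by auto
  moreover have "int_interval (RI t)" using RI_int .
  moreover have "RI (fst li) \<inter> A k \<subseteq> {a..b}" using ab by blast
  ultimately have "\<exists>J. max_int_interval J (RI (fst li) \<inter> A k) \<and> RI t \<subseteq> J"
    using exists_max_ext by blast
  then obtain J where J: "max_int_interval J (RI (fst li) \<inter> A k)" "RI t \<subseteq> J" by blast
  then obtain t' where t': "t' \<in> ext (fst li) k" "RI t' = J" using plus_complete by blast
  have l'in: "(t', snd li) \<in> label_ext ext k li" using t' unfolding label_ext_def by auto
  have "cost (t', snd li) \<le> cost l" using cost_mono[OF d(1)] l'in l by blast
  moreover have "RI_sup_n RI (t', snd li) l" unfolding RI_sup_n_def leq using J t' d by auto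
  ultimately show "\<exists>l'\<in>label_ext ext k li. dom_eq cost RI l' l"
    using l'in unfolding dom_eq_def RI_sup_eq_def by blast
qed

end
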